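(* Let $\mu$ be the law of a noisy process and $\nu$ the law of a Gaussian noisy process, and fix $n\ge2$. Assume (1) for every $\mathbf x\in\mathbb R^n$, the mean vectors and covariance matrices of $P_{\mathbf x}\mu$ and $P_{\mathbf x}\nu$ exist and all their entries are bounded in absolute value by a constant $M>0$; (2) the noise variances of $\mu$ and $\nu$ are both at least $\sigma^2>0$. Then for every $\mathbf x\in\mathbb R^n$, $$\operatorname{KL}(P_{\mathbf x}\mu,P_{\mathbf x}\nu)\le\frac{4n^2(M\vee1)^2}{\sigma^2}.$$
   Context: A stochastic process $f$ on $\mathbb R$ is noisy with noise variance $\sigma^2>0$ if $f=f^{\mathrm s}+f^{\mathrm n}$ with $f^{\mathrm s},f^{\mathrm n}$ independent, $f^{\mathrm s}$ (smooth part) having continuous sample paths, and $(f^{\mathrm n}(x_1),\dots,f^{\mathrm n}(x_n))\sim\mathcal N(\mathbf 0,\sigma^2\mathbf I_n)$ for pairwise distinct $x_i$; it is a Gaussian noisy process if $f^{\mathrm s}$ is Gaussian. Convention: for a noisy process with law $\mu$ and noise variance $\sigma_\mu^2$, and $\mathbf x\in\mathbb R^n$ (entries possibly repeated), $P_{\mathbf x}\mu$ is the law of $(f^{\mathrm s}(x_1),\dots,f^{\mathrm s}(x_n))+\boldsymbol\varepsilon$ with $\boldsymbol\varepsilon\sim\mathcal N(\mathbf 0,\sigma_\mu^2\mathbf I_n)$ independent of $f^{\mathrm s}$. *)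

theory Defs
  imports "HOL-Probability.Probability"
begin

definition real_gaussian_rv :: "'w measure \<Rightarrow> ('w \<Rightarrow> real) \<Rightarrow> bool" where
  "real_gaussian_rv M X \<longleftrightarrow> X \<in> borel_measurable M \<and>
     (\<exists>m s. distr M borel X = return borel m \<or>
            (s > 0 \<and> distr M borel X = density lborel (normal_density m s)))"

text \<open>Smooth part of a noisy process: a process on a probability space with continuous
  sample paths (each coordinate a random variable).\<close>
definition smooth_process :: "'w measure \<Rightarrow> ('w \<Rightarrow> real \<Rightarrow> real) \<Rightarrow> bool" where
  "smooth_process M fs \<longleftrightarrow> prob_space M \<and>
     (\<forall>t. (\<lambda>\<omega>. fs \<omega> t) \<in> borel_measurable M) \<and>
     (\<forall>\<omega>\<in>space M. continuous_on UNIV (fs \<omega>))"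

definition gaussian_process :: "'w measure \<Rightarrow> ('w \<Rightarrow> real \<Rightarrow> real) \<Rightarrow> bool" where
  "gaussian_process M fs \<longleftrightarrow>
     (\<forall>(T :: real set) (c :: real \<Rightarrow> real). finite T \<longrightarrow>
        real_gaussian_rv M (\<lambda>\<omega>. \<Sum>t\<in>T. c t * fs \<omega> t))"

definition iid_gauss :: "real \<Rightarrow> (real ^ 'n) measure" where
  "iid_gauss v = density lborel (\<lambda>y. \<Prod>i\<in>UNIV. normal_density 0 (sqrt v) (y $ i))"

text \<open>P_x mu: law of (f^s(x_1),...,f^s(x_n)) + eps, eps ~ N(0, v I_n) independent of f^s.
  The noisy process law mu is represented by its smooth part (M, fs) and noise variance v.\<close>
definition Px :: "'w measure \<Rightarrow> ('w \<Rightarrow> real \<Rightarrow> real) \<Rightarrow> real \<Rightarrow> real ^ 'n \<Rightarrow> (real ^ 'n) measure" where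
  "Px M fs v x = distr (M \<Otimes>\<^sub>M iid_gauss v) borel
      (\<lambda>(\<omega>, e). (\<chi> i. fs \<omega> (x $ i)) + e)"

definition mean_vec :: "(real ^ 'n) measure \<Rightarrow> 'n \<Rightarrow> real" where
  "mean_vec P i = (\<integral>y. y $ i \<partial>P)"

definition cov_mat :: "(real ^ 'n) measure \<Rightarrow> 'n \<Rightarrow> 'n \<Rightarrow> real" where
  "cov_mat P i j = (\<integral>y. (y $ i - mean_vec P i) * (y $ j - mean_vec P j) \<partial>P)"

definition has_mean_cov :: "(real ^ 'n) measure \<Rightarrow> bool" where
  "has_mean_cov P \<longleftrightarrow> (\<forall>i. integrable P (\<lambda>y. (y $ i)\<^sup>2))"

text \<open>Note the library's KL_divergence b Q P is int log_b(dP/dQ) dP.\<close>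
definition KL :: "'a measure \<Rightarrow> 'a measure \<Rightarrow> ereal" where
  "KL P Q = (if absolutely_continuous Q P \<and> integrable P (entropy_density (exp 1) Q P)
             then ereal (KL_divergence (exp 1) Q P) else \<infinity>)"

end

theory Submission
  imports Defs
begin


lemma meas_vec_lambda[measurable]:
  assumes "\<And>i. (\<lambda>w. f w i) \<in> borel_measurable M"
  shows "(\<lambda>w. (\<chi> i. f w i) :: real ^ 'n) \<in> borel_measurable M"
proof (subst borel_measurable_euclidean_space, intro ballI)
  fix b :: "real^'n" assume "b \<in> Basis"
  then obtain i where b: "b = axis i 1" by (auto simp: Basis_vec_def)
  show "(\<lambda>w. (\<chi> i. f w i) \<bullet> b) \<in> borel_measurable M"
    using assms[of i] by (simp add: b inner_axis)
qed

lemma vec_nth_meas[measurable]: "(\<lambda>y::real^'n. y $ i) \<in> borel_measurable borel"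
  by (intro borel_measurable_continuous_onI continuous_intros)

lemma nn_integral_vec_prod:
  fixes f :: "'n::finite \<Rightarrow> real \<Rightarrow> ennreal"
  assumes [measurable]: "\<And>i. f i \<in> borel_measurable borel"
  shows "(\<integral>\<^sup>+y. (\<Prod>i\<in>UNIV. f i (y $ i)) \<partial>(lborel :: (real^'n) measure)) = (\<Prod>i\<in>UNIV. \<integral>\<^sup>+x. f i x \<partial>lborel)"
proof -
  define g where "g b = f (SOME i. b = axis i (1::real))" for b :: "real^'n"
  have inj: "inj (\<lambda>i::'n. axis i (1::real))" by (auto simp: inj_on_def axis_eq_axis)
  have B: "(Basis :: (real^'n) set) = range (\<lambda>i. axis i 1)" by (auto simp: Basis_vec_def)
  have g: "g (axis i 1) = f i" for i
    unfolding g_def by (rule arg_cong[where f=f], rule some_equality) (auto simp: axis_eq_axis)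
  have "(\<integral>\<^sup>+y. (\<Prod>b\<in>Basis. g b (y \<bullet> b)) \<partial>(lborel :: (real^'n) measure)) = (\<Prod>b\<in>Basis. \<integral>\<^sup>+x. g b x \<partial>lborel)"
    by (rule nn_integral_lborel_prod) (auto simp: B g)
  moreover have "\<And>y::real^'n. (\<Prod>b\<in>Basis. g b (y \<bullet> b)) = (\<Prod>i\<in>UNIV. f i (y $ i))"
    unfolding B by (subst prod.reindex[OF inj]) (simp add: g inner_axis)
  moreover have "(\<Prod>b\<in>(Basis :: (real^'n) set). \<integral>\<^sup>+x. g b x \<partial>lborel) = (\<Prod>i\<in>UNIV. \<integral>\<^sup>+x. f i x \<partial>lborel)"
    unfolding B by (subst prod.reindex[OF inj]) (simp add: g)
  ultimately show ?thesis by simp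
qed



definition phi :: "real \<Rightarrow> real^'n \<Rightarrow> real" where
  "phi v z = (\<Prod>i\<in>UNIV. normal_density 0 (sqrt v) (z $ i))"

lemma phi_meas[measurable]: "phi v \<in> borel_measurable borel"
  unfolding phi_def by measurable

lemma phi_nonneg: "0 \<le> phi v z"
  unfolding phi_def by (auto intro: prod_nonneg)

lemma iid_gauss_phi: "iid_gauss v = density lborel (phi v)"
  unfolding iid_gauss_def phi_def ..

lemma normal_sq_shift:
  assumes "0 < s"
  shows "has_bochner_integral lborel (\<lambda>x. normal_density 0 s x * (c + x)\<^sup>2) (c\<^sup>2 + s\<^sup>2)"
proof -
  have a: "has_bochner_integral lborel (\<lambda>x. c\<^sup>2 * normal_density 0 s x) (c\<^sup>2 * 1)"
    by (intro has_bochner_integral_mult_right)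
       (metis has_bochner_integral_integrable integral_normal_density integrable_normal_density assms)
  have b: "has_bochner_integral lborel (\<lambda>x. 2 * c * (normal_density 0 s x * x)) (2 * c * 0)"
    by (intro has_bochner_integral_mult_right normal_moment_nz_1 assms)
  have "has_bochner_integral lborel (\<lambda>x. normal_density 0 s x * (x - 0) ^ (2 * 1)) (fact (2 * 1) / ((2 / s\<^sup>2)^1 * fact 1))"
    by (rule normal_moment_even[OF assms])
  then have c: "has_bochner_integral lborel (\<lambda>x. normal_density 0 s x * x\<^sup>2) (s\<^sup>2)"
    by (simp add: numeral_eq_Suc)
  have "has_bochner_integral lborel (\<lambda>x. c\<^sup>2 * normal_density 0 s x + 2 * c * (normal_density 0 s x * x) + normal_density 0 s x * x\<^sup>2) (c\<^sup>2 * 1 + 2 * c * 0 + s\<^sup>2)"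
    by (intro has_bochner_integral_add a b c)
  then show ?thesis
    by (rule has_bochner_integral_cong[THEN iffD1, rotated -1]) (auto simp: power2_eq_square algebra_simps)
qed

lemma nn_normal_sq_shift:
  assumes "0 < s"
  shows "(\<integral>\<^sup>+x. ennreal (normal_density 0 s x * (c + x)\<^sup>2) \<partial>lborel) = ennreal (c\<^sup>2 + s\<^sup>2)"
  using normal_sq_shift[OF assms, of c]
  by (subst nn_integral_eq_integral) (auto simp: has_bochner_integral_iff)

lemma nn_normal_1:
  assumes "0 < s"
  shows "(\<integral>\<^sup>+x. ennreal (normal_density 0 s x) \<partial>lborel) = 1"
  using assms by (subst nn_integral_eq_integral) auto

lemma phi_total:
  assumes "0 < v"
  shows "(\<integral>\<^sup>+z. ennreal (phi v z) \<partial>(lborel :: (real^'n) measure)) = 1"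
proof -
  have "(\<integral>\<^sup>+z. ennreal (phi v z) \<partial>(lborel :: (real^'n) measure))
      = (\<integral>\<^sup>+z. (\<Prod>i\<in>UNIV. ennreal (normal_density 0 (sqrt v) (z $ i))) \<partial>(lborel :: (real^'n) measure))"
    unfolding phi_def by (simp add: prod_ennreal)
  also have "\<dots> = (\<Prod>i\<in>(UNIV::'n set). \<integral>\<^sup>+x. ennreal (normal_density 0 (sqrt v) x) \<partial>lborel)"
    by (rule nn_integral_vec_prod) measurable
  also have "\<dots> = 1" using assms by (simp add: nn_normal_1)
  finally show ?thesis .
qed

lemma phi_sq:
  assumes "0 < v"
  shows "(\<integral>\<^sup>+z. ennreal (phi v z * (c + z $ j)\<^sup>2) \<partial>(lborel :: (real^'n) measure)) = ennreal (c\<^sup>2 + v)"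
proof -
  define f where "f i x = ennreal (normal_density 0 (sqrt v) x * (if i = j then (c + x)\<^sup>2 else 1))" for i x
  have "(\<integral>\<^sup>+z. ennreal (phi v z * (c + z $ j)\<^sup>2) \<partial>(lborel :: (real^'n) measure))
      = (\<integral>\<^sup>+z. (\<Prod>i\<in>UNIV. f i (z $ i)) \<partial>(lborel :: (real^'n) measure))"
  proof (rule nn_integral_cong)
    fix z :: "real^'n"
    have "(\<Prod>i\<in>UNIV. f i (z $ i)) = ennreal (\<Prod>i\<in>UNIV. normal_density 0 (sqrt v) (z $ i) * (if i = j then (c + z $ i)\<^sup>2 else 1))"
      unfolding f_def by (subst prod_ennreal) auto
    also have "(\<Prod>i\<in>UNIV. normal_density 0 (sqrt v) (z $ i) * (if i = j then (c + z $ i)\<^sup>2 else 1))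
       = phi v z * (c + z $ j)\<^sup>2"
      unfolding phi_def prod.distrib by (simp add: prod.If_cases)
    finally show "ennreal (phi v z * (c + z $ j)\<^sup>2) = (\<Prod>i\<in>UNIV. f i (z $ i))" by simp
  qed
  also have "\<dots> = (\<Prod>i\<in>(UNIV::'n set). \<integral>\<^sup>+x. f i x \<partial>lborel)"
    by (rule nn_integral_vec_prod) (unfold f_def, measurable)
  also have "\<dots> = (\<Prod>i\<in>(UNIV::'n set). if i = j then ennreal (c\<^sup>2 + v) else 1)"
    by (rule prod.cong) (use assms in \<open>auto simp: f_def nn_normal_1 nn_normal_sq_shift\<close>)
  also have "\<dots> = ennreal (c\<^sup>2 + v)"
    by (simp add: prod.If_cases)
  finally show ?thesis .
qed



lemma phi_formula:
  assumes "0 < v"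
  shows "phi v (z::real^'n) = (1 / sqrt (2 * pi * v)) ^ CARD('n) * exp (- (\<Sum>i\<in>UNIV. (z $ i)\<^sup>2) / (2 * v))"
proof -
  have "phi v z = (\<Prod>i\<in>UNIV. (1 / sqrt (2 * pi * v)) * exp (- (z $ i)\<^sup>2 / (2 * v)))"
    unfolding phi_def normal_density_def using assms by simp
  also have "\<dots> = (1 / sqrt (2 * pi * v)) ^ CARD('n) * (\<Prod>i\<in>UNIV. exp (- (z $ i)\<^sup>2 / (2 * v)))"
    by (subst prod.distrib) simp
  also have "(\<Prod>i\<in>UNIV. exp (- (z $ i)\<^sup>2 / (2 * v))) = exp (\<Sum>i\<in>UNIV. - (z $ i)\<^sup>2 / (2 * v))"
    by (simp add: exp_sum)
  also have "(\<Sum>i\<in>UNIV. - (z $ i)\<^sup>2 / (2 * v)) = - (\<Sum>i\<in>UNIV. (z $ i)\<^sup>2) / (2 * v)"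
    by (simp add: sum_divide_distrib sum_negf)
  finally show ?thesis .
qed

lemma phi_le:
  assumes "0 < v"
  shows "phi v (z::real^'n) \<le> (1 / sqrt (2 * pi * v)) ^ CARD('n)"
proof -
  have "exp (- (\<Sum>i\<in>UNIV. (z $ i)\<^sup>2) / (2 * v)) \<le> 1"
    using assms by (auto intro!: divide_nonneg_pos sum_nonneg)
  then show ?thesis unfolding phi_formula[OF assms]
    using assms by (intro mult_left_le) auto
qed

lemma prob_space_iid: "0 < v \<Longrightarrow> prob_space (iid_gauss v :: (real^'n) measure)"
  unfolding iid_gauss_phi
  by (rule prob_spaceI) (simp add: emeasure_density phi_total)

lemma lborel_shift:
  fixes c :: "real^'n"
  assumes [measurable]: "g \<in> borel_measurable borel"
  shows "(\<integral>\<^sup>+e. g (c + e) \<partial>lborel) = (\<integral>\<^sup>+y. g y \<partial>lborel)"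
proof -
  have "(\<integral>\<^sup>+y. g y \<partial>lborel) = (\<integral>\<^sup>+y. g y \<partial>distr lborel borel ((+) c))"
    by (simp add: lborel_distr_plus)
  also have "\<dots> = (\<integral>\<^sup>+e. g (c + e) \<partial>lborel)"
    by (subst nn_integral_distr) auto
  finally show ?thesis ..
qed

definition Fv :: "('w \<Rightarrow> real \<Rightarrow> real) \<Rightarrow> real^'n \<Rightarrow> 'w \<Rightarrow> real^'n" where
  "Fv fs x w = (\<chi> i. fs w (x $ i))"

lemma Fv_meas[measurable]:
  assumes "\<And>t. (\<lambda>w. fs w t) \<in> borel_measurable M"
  shows "Fv fs x \<in> borel_measurable M"
  unfolding Fv_def by (rule meas_vec_lambda) (rule assms)

lemma Px_alt: "Px M fs v x = distr (M \<Otimes>\<^sub>M iid_gauss v) borel (\<lambda>z. Fv fs x (fst z) + snd z)"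
  unfolding Px_def Fv_def by (simp add: case_prod_beta')

lemma Px_density:
  fixes x :: "real^'n"
  assumes M: "prob_space M" and meas: "\<And>t. (\<lambda>w. fs w t) \<in> borel_measurable M" and v: "0 < v"
  shows "Px M fs v x = density lborel (\<lambda>y. \<integral>\<^sup>+w. ennreal (phi v (y - Fv fs x w)) \<partial>M)"
proof -
  interpret M: prob_space M by fact
  interpret I: prob_space "iid_gauss v :: (real^'n) measure" by (rule prob_space_iid[OF v])
  interpret MI: pair_sigma_finite M "iid_gauss v :: (real^'n) measure"
    by (intro pair_sigma_finite.intro M.sigma_finite_measure_axioms I.sigma_finite_measure_axioms)
  interpret ML2: pair_sigma_finite M "lborel :: (real^'n) measure"
    by (intro pair_sigma_finite.intro M.sigma_finite_measure_axioms lborel.sigma_finite_measure_axioms)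
  note [measurable] = Fv_meas[OF meas]
  have hm[measurable]: "(\<lambda>z. Fv fs x (fst z) + snd z) \<in> borel_measurable (M \<Otimes>\<^sub>M iid_gauss v)"
    unfolding iid_gauss_phi by measurable
  show ?thesis
  proof (rule measure_eqI)
    show "sets (Px M fs v x) = sets (density lborel (\<lambda>y. \<integral>\<^sup>+w. ennreal (phi v (y - Fv fs x w)) \<partial>M))"
      by (simp add: Px_alt)
  next
    fix A assume "A \<in> sets (Px M fs v x)"
    then have A[measurable]: "A \<in> sets borel" by (simp add: Px_alt)
    have "emeasure (Px M fs v x) A = (\<integral>\<^sup>+y. indicator A y \<partial>Px M fs v x)"
      by (simp add: Px_alt)
    also have "\<dots> = (\<integral>\<^sup>+z. indicator A (Fv fs x (fst z) + snd z) \<partial>(M \<Otimes>\<^sub>M iid_gauss v))"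
      unfolding Px_alt by (subst nn_integral_distr) auto
    also have "\<dots> = (\<integral>\<^sup>+w. \<integral>\<^sup>+e. indicator A (Fv fs x w + e) \<partial>iid_gauss v \<partial>M)"
      by (subst I.nn_integral_fst[symmetric]) (auto simp: iid_gauss_phi)
    also have "\<dots> = (\<integral>\<^sup>+w. \<integral>\<^sup>+y. ennreal (phi v (y - Fv fs x w)) * indicator A y \<partial>lborel \<partial>M)"
    proof (rule nn_integral_cong)
      fix w
      have "(\<integral>\<^sup>+e. indicator A (Fv fs x w + e) \<partial>iid_gauss v) = (\<integral>\<^sup>+e. ennreal (phi v e) * indicator A (Fv fs x w + e) \<partial>lborel)"
        unfolding iid_gauss_phi by (subst nn_integral_density) auto
      also have "\<dots> = (\<integral>\<^sup>+e. (\<lambda>y. ennreal (phi v (y - Fv fs x w)) * indicator A y) (Fv fs x w + e) \<partial>lborel)"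
        by simp
      also have "\<dots> = (\<integral>\<^sup>+y. ennreal (phi v (y - Fv fs x w)) * indicator A y \<partial>lborel)"
        by (rule lborel_shift) measurable
      finally show "(\<integral>\<^sup>+e. indicator A (Fv fs x w + e) \<partial>iid_gauss v) = \<dots>" .
    qed
    also have "\<dots> = (\<integral>\<^sup>+y. \<integral>\<^sup>+w. ennreal (phi v (y - Fv fs x w)) * indicator A y \<partial>M \<partial>lborel)"
      by (rule ML2.Fubini'[symmetric]) measurable
    also have "\<dots> = (\<integral>\<^sup>+y. (\<integral>\<^sup>+w. ennreal (phi v (y - Fv fs x w)) \<partial>M) * indicator A y \<partial>lborel)"
      by (rule nn_integral_cong) (rule nn_integral_multc, measurable)
    also have "\<dots> = emeasure (density lborel (\<lambda>y. \<integral>\<^sup>+w. ennreal (phi v (y - Fv fs x w)) \<partial>M)) A"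
      by (subst emeasure_density) auto
    finally show "emeasure (Px M fs v x) A = emeasure (density lborel (\<lambda>y. \<integral>\<^sup>+w. ennreal (phi v (y - Fv fs x w)) \<partial>M)) A" .
  qed
qed



lemma (in prob_space) jensen_exp:
  fixes X :: "'a \<Rightarrow> real"
  assumes X: "integrable M X" and eX: "integrable M (\<lambda>w. exp (X w))"
  shows "exp (\<integral>w. X w \<partial>M) \<le> (\<integral>w. exp (X w) \<partial>M)"
proof -
  define c where "c = (\<integral>w. X w \<partial>M)"
  have "(\<integral>w. exp c * (1 + (X w - c)) \<partial>M) \<le> (\<integral>w. exp (X w) \<partial>M)"
  proof (rule Bochner_Integration.integral_mono)
    show "integrable M (\<lambda>w. exp c * (1 + (X w - c)))" using X by auto
    show "integrable M (\<lambda>w. exp (X w))" by fact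
    fix w
    have "1 + (X w - c) \<le> exp (X w - c)" by (rule exp_ge_add_one_self)
    then have "exp c * (1 + (X w - c)) \<le> exp c * exp (X w - c)" by (intro mult_left_mono) auto
    also have "\<dots> = exp (X w)" by (simp add: exp_diff)
    finally show "exp c * (1 + (X w - c)) \<le> exp (X w)" .
  qed
  moreover have "(\<integral>w. exp c * (1 + (X w - c)) \<partial>M) = exp c"
    using X by (simp add: c_def prob_space)
  ultimately show ?thesis by (simp add: c_def)
qed

lemma (in prob_space) sq_integrable_integrable:
  fixes X :: "'a \<Rightarrow> real"
  assumes [measurable]: "X \<in> borel_measurable M" and "integrable M (\<lambda>w. (X w)\<^sup>2)"
  shows "integrable M X"
proof (rule Bochner_Integration.integrable_bound[of _ "\<lambda>w. 1 + (X w)\<^sup>2"])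
  show "integrable M (\<lambda>w. 1 + (X w)\<^sup>2)" using assms by auto
  show "AE w in M. norm (X w) \<le> norm (1 + (X w)\<^sup>2)"
  proof (intro AE_I2)
    fix w show "norm (X w) \<le> norm (1 + (X w)\<^sup>2)"
    proof (cases "\<bar>X w\<bar> \<le> 1")
      case True then show ?thesis using zero_le_power2[of "X w"] by (simp only: real_norm_def)
    next
      case False
      then have "\<bar>X w\<bar> * 1 \<le> \<bar>X w\<bar> * \<bar>X w\<bar>" by (intro mult_left_mono) auto
      then show ?thesis by (simp add: power2_eq_square abs_mult_self_eq)
    qed
  qed
qed fact

locale noisy =
  fixes M :: "'w measure" and fs :: "'w \<Rightarrow> real \<Rightarrow> real" and v :: real and x :: "real^'n"
  assumes M: "prob_space M" and meas: "\<And>t. (\<lambda>w. fs w t) \<in> borel_measurable M" and v: "0 < v"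
begin

interpretation M: prob_space M by (rule M)

abbreviation "G \<equiv> Fv fs x"

lemma G_meas[measurable]: "G \<in> borel_measurable M"
  by (rule Fv_meas[OF meas])

lemma Gj_meas[measurable]: "(\<lambda>w. G w $ j) \<in> borel_measurable M"
  by measurable

definition pd :: "real^'n \<Rightarrow> real" where
  "pd y = (\<integral>w. phi v (y - G w) \<partial>M)"

definition Cv :: real where "Cv = (1 / sqrt (2 * pi * v)) ^ CARD('n)"

lemma Cv_pos: "0 < Cv" unfolding Cv_def using v by simp

lemma phi_int: "integrable M (\<lambda>w. phi v (y - G w))"
proof -
  have "\<bar>phi v (y - G w)\<bar> \<le> Cv" for w using phi_le[OF v, of "y - G w"] phi_nonneg[of v "y - G w"] by (simp add: Cv_def)
  then show ?thesis by (intro M.integrable_const_bound[where B=Cv]) auto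
qed

lemma pd_meas[measurable]: "pd \<in> borel_measurable borel"
  unfolding pd_def by measurable

lemma pd_nonneg: "0 \<le> pd y"
  unfolding pd_def by (intro integral_nonneg_AE) (auto simp: phi_nonneg)

lemma pd_le: "pd y \<le> Cv"
proof -
  have "pd y \<le> (\<integral>w. Cv \<partial>M)"
  proof -
    have "phi v (y - G w) \<le> Cv" for w using phi_le[OF v, of "y - G w"] by (simp add: Cv_def)
    then show ?thesis unfolding pd_def using phi_int by (intro Bochner_Integration.integral_mono) auto
  qed
  then show ?thesis by (simp add: M.prob_space)
qed

lemma nn_pd: "(\<integral>\<^sup>+w. ennreal (phi v (y - G w)) \<partial>M) = ennreal (pd y)"
  unfolding pd_def using phi_int by (intro nn_integral_eq_integral) (auto simp: phi_nonneg)

lemma P_eq: "Px M fs v x = density lborel (\<lambda>y. ennreal (pd y))"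
  using Px_density[OF M meas v, where x=x] by (simp add: nn_pd)

lemma prob_P: "prob_space (Px M fs v x)"
proof -
  interpret I: prob_space "iid_gauss v :: (real^'n) measure" by (rule prob_space_iid[OF v])
  interpret MI: prob_space "M \<Otimes>\<^sub>M (iid_gauss v :: (real^'n) measure)"
    by (intro prob_space_pair M I.prob_space_axioms)
  have hm[measurable]: "(\<lambda>z. Fv fs x (fst z) + snd z) \<in> borel_measurable (M \<Otimes>\<^sub>M iid_gauss v)"
    unfolding iid_gauss_phi by measurable
  show ?thesis unfolding Px_alt by (rule MI.prob_space_distr) (rule hm)
qed

lemma pd_total: "(\<integral>\<^sup>+y. ennreal (pd y) \<partial>lborel) = 1"
proof -
  interpret P: prob_space "Px M fs v x" by (rule prob_P)
  have "emeasure (Px M fs v x) (space (Px M fs v x)) = 1" by (rule P.emeasure_space_1)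
  then show ?thesis unfolding P_eq by (simp add: emeasure_density)
qed

lemma pd_integrable: "integrable lborel pd" and pd_integral: "(\<integral>y. pd y \<partial>lborel) = 1"
proof -
  show "integrable lborel pd"
    by (rule integrableI_nn_integral_finite[where x=1]) (auto simp: pd_total pd_nonneg)
  then show "(\<integral>y. pd y \<partial>lborel) = 1"
    using pd_total by (subst (asm) nn_integral_eq_integral) (auto simp: pd_nonneg)
qed

lemma pd_pos: "0 < pd y"
proof -
  have "(\<integral>w. phi v (y - G w) \<partial>M) \<noteq> 0"
  proof
    assume "(\<integral>w. phi v (y - G w) \<partial>M) = 0"
    then have "AE w in M. phi v (y - G w) = 0"
      using phi_int by (subst integral_nonneg_eq_0_iff_AE[symmetric]) (auto simp: phi_nonneg)
    moreover have nz: "\<And>z. phi v z \<noteq> 0" using v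
      unfolding phi_def using normal_density_pos[of "sqrt v"] by (auto simp: less_imp_neq[symmetric])
    ultimately have "AE w in M. False"
      by (elim eventually_mono) auto
    then show False by (simp add: M.AE_False)
  qed
  then show ?thesis using pd_nonneg[of y] unfolding pd_def by linarith
qed

end



lemma sq_diff_le: "(a - b)\<^sup>2 \<le> 2 * a\<^sup>2 + 2 * (b::real)\<^sup>2"
  using zero_le_power2[of "a + b"] by (simp add: power2_eq_square algebra_simps)

context noisy
begin

interpretation M: prob_space M by (rule M)

lemma mom:
  assumes int: "integrable (Px M fs v x) (\<lambda>y. (y $ j)\<^sup>2)"
  shows "integrable M (\<lambda>w. (G w $ j)\<^sup>2)" and "(\<integral>w. (G w $ j)\<^sup>2 \<partial>M) + v = (\<integral>y. (y $ j)\<^sup>2 \<partial>Px M fs v x)"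
proof -
  interpret I: prob_space "iid_gauss v :: (real^'n) measure" by (rule prob_space_iid[OF v])
  have hm[measurable]: "(\<lambda>z. Fv fs x (fst z) + snd z) \<in> borel_measurable (M \<Otimes>\<^sub>M iid_gauss v)"
    unfolding iid_gauss_phi by measurable
  have "ennreal (\<integral>y. (y $ j)\<^sup>2 \<partial>Px M fs v x) = (\<integral>\<^sup>+y. ennreal ((y $ j)\<^sup>2) \<partial>Px M fs v x)"
    using int by (intro nn_integral_eq_integral[symmetric]) auto
  also have "\<dots> = (\<integral>\<^sup>+z. ennreal (((G (fst z) + snd z) $ j)\<^sup>2) \<partial>(M \<Otimes>\<^sub>M iid_gauss v))"
    unfolding Px_alt by (subst nn_integral_distr) auto
  also have "\<dots> = (\<integral>\<^sup>+w. \<integral>\<^sup>+e. ennreal ((G w $ j + e $ j)\<^sup>2) \<partial>iid_gauss v \<partial>M)"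
    by (subst I.nn_integral_fst[symmetric]) (auto simp: iid_gauss_phi)
  also have "\<dots> = (\<integral>\<^sup>+w. ennreal ((G w $ j)\<^sup>2 + v) \<partial>M)"
  proof (rule nn_integral_cong)
    fix w
    have "(\<integral>\<^sup>+e. ennreal ((G w $ j + e $ j)\<^sup>2) \<partial>iid_gauss v) = (\<integral>\<^sup>+e. ennreal (phi v e) * ennreal ((G w $ j + e $ j)\<^sup>2) \<partial>lborel)"
      unfolding iid_gauss_phi by (subst nn_integral_density) auto
    also have "\<dots> = (\<integral>\<^sup>+e. ennreal (phi v e * (G w $ j + e $ j)\<^sup>2) \<partial>lborel)"
      by (simp add: ennreal_mult phi_nonneg)
    also have "\<dots> = ennreal ((G w $ j)\<^sup>2 + v)" by (rule phi_sq[OF v])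
    finally show "(\<integral>\<^sup>+e. ennreal ((G w $ j + e $ j)\<^sup>2) \<partial>iid_gauss v) = ennreal ((G w $ j)\<^sup>2 + v)" .
  qed
  finally have eq: "(\<integral>\<^sup>+w. ennreal ((G w $ j)\<^sup>2 + v) \<partial>M) = ennreal (\<integral>y. (y $ j)\<^sup>2 \<partial>Px M fs v x)" ..
  have i2: "integrable M (\<lambda>w. (G w $ j)\<^sup>2 + v)"
    by (rule integrableI_nn_integral_finite[OF _ _ eq]) (use v in auto)
  have "(\<integral>w. (G w $ j)\<^sup>2 + v \<partial>M) = (\<integral>y. (y $ j)\<^sup>2 \<partial>Px M fs v x)"
  proof -
    have "0 \<le> (\<integral>y. (y $ j)\<^sup>2 \<partial>Px M fs v x)" by (intro integral_nonneg_AE) auto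
    moreover have "ennreal (\<integral>w. (G w $ j)\<^sup>2 + v \<partial>M) = ennreal (\<integral>y. (y $ j)\<^sup>2 \<partial>Px M fs v x)"
      using eq i2 v by (subst nn_integral_eq_integral[symmetric]) auto
    moreover have "0 \<le> (\<integral>w. (G w $ j)\<^sup>2 + v \<partial>M)" using v by (intro integral_nonneg_AE) auto
    ultimately show ?thesis by simp
  qed
  moreover show i1: "integrable M (\<lambda>w. (G w $ j)\<^sup>2)"
    using Bochner_Integration.integrable_diff[OF i2 M.integrable_const[of v]] by simp
  ultimately show "(\<integral>w. (G w $ j)\<^sup>2 \<partial>M) + v = (\<integral>y. (y $ j)\<^sup>2 \<partial>Px M fs v x)"
    using i1 by (simp add: M.prob_space)
qed

lemma jensen_q:
  assumes int: "\<And>j. integrable M (\<lambda>w. (G w $ j)\<^sup>2)"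
  shows "Cv * exp (- ((\<Sum>j\<in>UNIV. (y $ j)\<^sup>2) + (\<Sum>j\<in>UNIV. \<integral>w. (G w $ j)\<^sup>2 \<partial>M)) / v) \<le> pd y"
proof -
  define X where "X w = - (\<Sum>i\<in>UNIV. (y $ i - G w $ i)\<^sup>2) / (2 * v)" for w
  have Xm[measurable]: "X \<in> borel_measurable M" unfolding X_def by measurable
  have intd: "integrable M (\<lambda>w. (y $ i - G w $ i)\<^sup>2)" for i
  proof (rule Bochner_Integration.integrable_bound[of _ "\<lambda>w. 2 * (y $ i)\<^sup>2 + 2 * (G w $ i)\<^sup>2"])
    show "integrable M (\<lambda>w. 2 * (y $ i)\<^sup>2 + 2 * (G w $ i)\<^sup>2)" using int[of i] by auto
    show "AE w in M. norm ((y $ i - G w $ i)\<^sup>2) \<le> norm (2 * (y $ i)\<^sup>2 + 2 * (G w $ i)\<^sup>2)"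
      using sq_diff_le by (intro AE_I2) auto
  qed measurable
  have intX: "integrable M X" unfolding X_def using intd by auto
  have intE: "integrable M (\<lambda>w. exp (X w))"
  proof (rule M.integrable_const_bound[where B=1])
    show "AE w in M. norm (exp (X w)) \<le> 1"
      using v by (intro AE_I2) (auto simp: X_def intro!: divide_nonneg_pos sum_nonneg)
  qed measurable
  have pdX: "pd y = Cv * (\<integral>w. exp (X w) \<partial>M)"
    unfolding pd_def phi_formula[OF v] Cv_def X_def by simp
  have "(\<integral>w. X w \<partial>M) = - (\<Sum>i\<in>UNIV. \<integral>w. (y $ i - G w $ i)\<^sup>2 \<partial>M) / (2 * v)"
    unfolding X_def using intd by simp
  also have "\<dots> \<ge> - (\<Sum>i\<in>UNIV. 2 * (y $ i)\<^sup>2 + 2 * (\<integral>w. (G w $ i)\<^sup>2 \<partial>M)) / (2 * v)"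
  proof -
    have "(\<integral>w. (y $ i - G w $ i)\<^sup>2 \<partial>M) \<le> 2 * (y $ i)\<^sup>2 + 2 * (\<integral>w. (G w $ i)\<^sup>2 \<partial>M)" for i
    proof -
      have "(\<integral>w. (y $ i - G w $ i)\<^sup>2 \<partial>M) \<le> (\<integral>w. 2 * (y $ i)\<^sup>2 + 2 * (G w $ i)\<^sup>2 \<partial>M)"
        using intd int sq_diff_le by (intro Bochner_Integration.integral_mono) auto
      also have "\<dots> = 2 * (y $ i)\<^sup>2 + 2 * (\<integral>w. (G w $ i)\<^sup>2 \<partial>M)"
        using int[of i] by (simp add: M.prob_space)
      finally show ?thesis .
    qed
    then have "(\<Sum>i\<in>UNIV. \<integral>w. (y $ i - G w $ i)\<^sup>2 \<partial>M) \<le> (\<Sum>i\<in>UNIV. 2 * (y $ i)\<^sup>2 + 2 * (\<integral>w. (G w $ i)\<^sup>2 \<partial>M))"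
      by (rule sum_mono)
    then show ?thesis using v by (intro divide_right_mono) auto
  qed
  also have "- (\<Sum>i\<in>UNIV. 2 * (y $ i)\<^sup>2 + 2 * (\<integral>w. (G w $ i)\<^sup>2 \<partial>M)) / (2 * v)
      = - ((\<Sum>j\<in>UNIV. (y $ j)\<^sup>2) + (\<Sum>j\<in>UNIV. \<integral>w. (G w $ j)\<^sup>2 \<partial>M)) / v"
    using v by (simp add: sum.distrib sum_distrib_left[symmetric] field_simps)
  finally have "exp (- ((\<Sum>j\<in>UNIV. (y $ j)\<^sup>2) + (\<Sum>j\<in>UNIV. \<integral>w. (G w $ j)\<^sup>2 \<partial>M)) / v) \<le> exp (\<integral>w. X w \<partial>M)"
    by simp
  also have "\<dots> \<le> (\<integral>w. exp (X w) \<partial>M)" by (rule M.jensen_exp[OF intX intE])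
  finally show ?thesis unfolding pdX using Cv_pos by (intro mult_left_mono) auto
qed

end


context noisy begin
lemma ln_Cv: "ln Cv = - real CARD('n) * (ln (2 * pi) + ln v) / 2"
  unfolding Cv_def using v
  by (simp add: ln_realpow ln_div ln_sqrt ln_mult)
end

lemma sq_moment:
  fixes P :: "(real^'n) measure"
  assumes "prob_space P" and sP: "sets P = sets borel" and int: "integrable P (\<lambda>y. (y $ i)\<^sup>2)"
  shows "(\<integral>y. (y $ i)\<^sup>2 \<partial>P) = cov_mat P i i + (mean_vec P i)\<^sup>2"
proof -
  interpret P: prob_space P by fact
  have m[measurable]: "(\<lambda>y. y $ i) \<in> borel_measurable P"
    unfolding measurable_cong_sets[OF sP refl] by (rule vec_nth_meas)
  have i1: "integrable P (\<lambda>y. y $ i)" by (rule P.sq_integrable_integrable[OF m int])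
  define c where "c = mean_vec P i"
  have c: "c = (\<integral>y. y $ i \<partial>P)" unfolding c_def mean_vec_def ..
  have "cov_mat P i i = (\<integral>y. (y $ i)\<^sup>2 - 2 * c * (y $ i) + c\<^sup>2 \<partial>P)"
    unfolding cov_mat_def c_def[symmetric] by (intro Bochner_Integration.integral_cong) (auto simp: power2_eq_square algebra_simps)
  also have "\<dots> = (\<integral>y. (y $ i)\<^sup>2 \<partial>P) - 2 * c * c + c\<^sup>2"
    using int i1 by (simp add: P.prob_space c[symmetric])
  finally show ?thesis by (simp add: c_def[symmetric] power2_eq_square)
qed



theorem mainTheorem14:
  fixes M :: "'a measure" and fs :: "'a \<Rightarrow> real \<Rightarrow> real" and v\<^sub>\<mu> :: real
    and N :: "'b measure" and gs :: "'b \<Rightarrow> real \<Rightarrow> real" and v\<^sub>\<nu> :: real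
    and Mb \<sigma>2 :: real and x :: "real ^ 'n"
  assumes n2: "CARD('n) \<ge> 2"
    and mu: "smooth_process M fs" "v\<^sub>\<mu> > 0"
    and nu: "smooth_process N gs" "gaussian_process N gs" "v\<^sub>\<nu> > 0"
    and Mpos: "Mb > 0"
    and ex: "\<And>y :: real ^ 'n. has_mean_cov (Px M fs v\<^sub>\<mu> y) \<and> has_mean_cov (Px N gs v\<^sub>\<nu> y)"
    and bnd_mean: "\<And>(y :: real ^ 'n) i. \<bar>mean_vec (Px M fs v\<^sub>\<mu> y) i\<bar> \<le> Mb \<and> \<bar>mean_vec (Px N gs v\<^sub>\<nu> y) i\<bar> \<le> Mb"
    and bnd_cov: "\<And>(y :: real ^ 'n) i j. \<bar>cov_mat (Px M fs v\<^sub>\<mu> y) i j\<bar> \<le> Mb \<and> \<bar>cov_mat (Px N gs v\<^sub>\<nu> y) i j\<bar> \<le> Mb"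
    and sig: "\<sigma>2 > 0" "v\<^sub>\<mu> \<ge> \<sigma>2" "v\<^sub>\<nu> \<ge> \<sigma>2"
  shows "KL (Px M fs v\<^sub>\<mu> x) (Px N gs v\<^sub>\<nu> x) \<le> ereal (4 * (real CARD('n))\<^sup>2 * (max Mb 1)\<^sup>2 / \<sigma>2)"
proof -
  have Mp: "prob_space M" and Mm: "\<And>t. (\<lambda>w. fs w t) \<in> borel_measurable M"
    using mu(1) unfolding smooth_process_def by auto
  have Np: "prob_space N" and Nm: "\<And>t. (\<lambda>w. gs w t) \<in> borel_measurable N"
    using nu(1) unfolding smooth_process_def by auto
  interpret mu: noisy M fs v\<^sub>\<mu> x by (rule noisy.intro[OF Mp Mm mu(2)])
  interpret nu: noisy N gs v\<^sub>\<nu> x by (rule noisy.intro[OF Np Nm nu(3)])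
  define n where "n = real CARD('n)"
  define A where "A = Mb + Mb\<^sup>2"
  define P where "P = Px M fs v\<^sub>\<mu> x"
  define Q where "Q = Px N gs v\<^sub>\<nu> x"
  define p where "p = mu.pd"
  define q where "q = nu.pd"
  have P_eq: "P = density lborel p" unfolding P_def p_def by (rule mu.P_eq)
  have Q_eq: "Q = density lborel q" unfolding Q_def q_def by (rule nu.P_eq)
  have p_pos: "0 < p y" for y unfolding p_def by (rule mu.pd_pos)
  have q_pos: "0 < q y" for y unfolding q_def by (rule nu.pd_pos)
  have pm[measurable]: "p \<in> borel_measurable borel" unfolding p_def by (rule mu.pd_meas)
  have qm[measurable]: "q \<in> borel_measurable borel" unfolding q_def by (rule nu.pd_meas)
  have sP: "sets P = sets borel" unfolding P_def Px_def by simp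
  have sQ: "sets Q = sets borel" unfolding Q_def Px_def by simp
  have intP: "integrable P (\<lambda>y. (y $ i)\<^sup>2)" for i using ex[of x] unfolding has_mean_cov_def P_def by auto
  have intQ: "integrable Q (\<lambda>y. (y $ i)\<^sup>2)" for i using ex[of x] unfolding has_mean_cov_def Q_def by auto
  have mc_le: "c + m\<^sup>2 \<le> A" if "\<bar>c\<bar> \<le> Mb" "\<bar>m\<bar> \<le> Mb" for c m
  proof -
    have "m\<^sup>2 = \<bar>m\<bar>\<^sup>2" by simp
    also have "\<dots> \<le> Mb\<^sup>2" using that by (intro power_mono) auto
    finally show ?thesis using that unfolding A_def by linarith
  qed
  have EP: "(\<integral>y. (y $ i)\<^sup>2 \<partial>P) \<le> A" for i
    using sq_moment[OF mu.prob_P _ intP[unfolded P_def]] mc_le bnd_cov[of x i i] bnd_mean[of x i]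
    unfolding P_def by (simp add: Px_def)
  have EQ: "(\<integral>y. (y $ i)\<^sup>2 \<partial>Q) \<le> A" for i
    using sq_moment[OF nu.prob_P _ intQ[unfolded Q_def]] mc_le bnd_cov[of x i i] bnd_mean[of x i]
    unfolding Q_def by (simp add: Px_def)
  have intG: "integrable N (\<lambda>w. (nu.G w $ j)\<^sup>2)" for j
    by (rule nu.mom(1)) (use intQ in \<open>simp add: Q_def\<close>)
  have EG: "(\<integral>w. (nu.G w $ j)\<^sup>2 \<partial>N) + v\<^sub>\<nu> = (\<integral>y. (y $ j)\<^sup>2 \<partial>Q)" for j
    unfolding Q_def by (rule nu.mom(2)) (use intQ in \<open>simp add: Q_def\<close>)
  have EG0: "0 \<le> (\<integral>w. (nu.G w $ j)\<^sup>2 \<partial>N)" for j by (intro integral_nonneg_AE) auto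
  define S2 where "S2 = (\<Sum>j\<in>UNIV. \<integral>w. (nu.G w $ j)\<^sup>2 \<partial>N)"
  have S2_0: "0 \<le> S2" unfolding S2_def using EG0 by (intro sum_nonneg) auto
  have S2_le: "S2 \<le> n * A"
  proof -
    have "S2 \<le> (\<Sum>j\<in>(UNIV::'n set). A)" unfolding S2_def
      using EG EQ nu(3) by (intro sum_mono) (smt (verit))
    then show ?thesis by (simp add: n_def)
  qed
  have vA: "v\<^sub>\<nu> \<le> A" using EG[of undefined] EQ[of undefined] EG0[of undefined] by linarith
  define sq where "sq y = (\<Sum>j\<in>UNIV. (y $ j)\<^sup>2)" for y :: "real^'n"
  have sq_0: "0 \<le> sq y" for y unfolding sq_def by (auto intro: sum_nonneg)
  have sqm[measurable]: "sq \<in> borel_measurable borel" unfolding sq_def by measurable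
  have qlow: "nu.Cv * exp (- (sq y + S2) / v\<^sub>\<nu>) \<le> q y" for y
    unfolding q_def sq_def S2_def by (rule nu.jensen_q[OF intG])
  define Kc where "Kc = ln mu.Cv - ln nu.Cv"
  define f where "f y = p y * ln (p y / q y)" for y
  define V where "V y = p y * (Kc + (sq y + S2) / v\<^sub>\<nu>)" for y
  have fm[measurable]: "f \<in> borel_measurable borel" unfolding f_def by measurable
  have fV: "f y \<le> V y" for y
  proof -
    have "ln (p y) \<le> ln mu.Cv" using p_pos[of y] mu.pd_le[of y] unfolding p_def by simp
    moreover have "ln (nu.Cv * exp (- (sq y + S2) / v\<^sub>\<nu>)) \<le> ln (q y)"
      using qlow[of y] nu.Cv_pos by (intro ln_mono) auto
    moreover have "ln (nu.Cv * exp (- (sq y + S2) / v\<^sub>\<nu>)) = ln nu.Cv - (sq y + S2) / v\<^sub>\<nu>"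
      using nu.Cv_pos by (simp add: ln_mult diff_divide_distrib add_divide_distrib)
    ultimately have "ln (p y / q y) \<le> Kc + (sq y + S2) / v\<^sub>\<nu>"
      using p_pos[of y] q_pos[of y] unfolding Kc_def by (simp add: ln_div)
    then show ?thesis unfolding f_def V_def using p_pos[of y] by (intro mult_left_mono) auto
  qed
  have fL: "p y - q y \<le> f y" for y
  proof -
    have "ln (q y / p y) \<le> q y / p y - 1" using p_pos[of y] q_pos[of y] by (intro ln_le_minus_one) auto
    moreover have "ln (p y / q y) = - ln (q y / p y)" using p_pos[of y] q_pos[of y] by (simp add: ln_div)
    ultimately have "1 - q y / p y \<le> ln (p y / q y)" by linarith
    then have "p y * (1 - q y / p y) \<le> p y * ln (p y / q y)" using p_pos[of y] by (intro mult_left_mono) auto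
    then show ?thesis unfolding f_def using p_pos[of y] by (simp add: algebra_simps)
  qed
  have intp: "integrable lborel p" unfolding p_def by (rule mu.pd_integrable)
  have intq: "integrable lborel q" unfolding q_def by (rule nu.pd_integrable)
  have ip: "(\<integral>y. p y \<partial>lborel) = 1" unfolding p_def by (rule mu.pd_integral)
  have intsqP: "integrable P sq" unfolding sq_def using intP by auto
  have Esq: "(\<integral>y. sq y \<partial>P) \<le> n * A"
  proof -
    have "(\<integral>y. sq y \<partial>P) = (\<Sum>j\<in>UNIV. \<integral>y. (y $ j)\<^sup>2 \<partial>P)" unfolding sq_def using intP by simp
    also have "\<dots> \<le> (\<Sum>j\<in>(UNIV::'n set). A)" using EP by (intro sum_mono) auto
    finally show ?thesis by (simp add: n_def)
  qed
  have intpsq: "integrable lborel (\<lambda>y. p y * sq y)"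
    using intsqP unfolding P_eq by (subst (asm) integrable_density) (auto simp: p_pos less_imp_le)
  have Epsq: "(\<integral>y. p y * sq y \<partial>lborel) = (\<integral>y. sq y \<partial>P)"
    unfolding P_eq by (subst integral_density) (auto simp: p_pos less_imp_le)
  have Veq: "V y = Kc * p y + (1 / v\<^sub>\<nu>) * (p y * sq y) + (S2 / v\<^sub>\<nu>) * p y" for y
    unfolding V_def by (simp add: field_simps add_divide_distrib)
  have intV: "integrable lborel V" unfolding Veq using intp intpsq by auto
  have IV: "(\<integral>y. V y \<partial>lborel) = Kc + (\<integral>y. sq y \<partial>P) / v\<^sub>\<nu> + S2 / v\<^sub>\<nu>"
    unfolding Veq using intp intpsq by (simp add: ip Epsq)
  have intf: "integrable lborel f"
  proof (rule Bochner_Integration.integrable_bound[of _ "\<lambda>y. \<bar>p y - q y\<bar> + \<bar>V y\<bar>"])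
    show "integrable lborel (\<lambda>y. \<bar>p y - q y\<bar> + \<bar>V y\<bar>)" using intp intq intV by auto
    show "AE y in lborel. norm (f y) \<le> norm (\<bar>p y - q y\<bar> + \<bar>V y\<bar>)"
    proof (intro AE_I2)
      fix y show "norm (f y) \<le> norm (\<bar>p y - q y\<bar> + \<bar>V y\<bar>)" using fV[of y] fL[of y] by simp
    qed
  qed measurable
  have If: "(\<integral>y. f y \<partial>lborel) \<le> (\<integral>y. V y \<partial>lborel)"
    using intf intV fV by (intro Bochner_Integration.integral_mono) auto
  have Kc_le: "Kc \<le> n / 2 * (v\<^sub>\<nu> / \<sigma>2)"
  proof -
    have "ln v\<^sub>\<nu> - ln v\<^sub>\<mu> = ln (v\<^sub>\<nu> / v\<^sub>\<mu>)" using mu(2) nu(3) by (simp add: ln_div)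
    also have "\<dots> \<le> v\<^sub>\<nu> / v\<^sub>\<mu>" using mu(2) nu(3) by (intro less_imp_le[OF ln_less_self]) auto
    also have "\<dots> \<le> v\<^sub>\<nu> / \<sigma>2" using sig nu(3) by (intro divide_left_mono) auto
    finally have L: "ln v\<^sub>\<nu> - ln v\<^sub>\<mu> \<le> v\<^sub>\<nu> / \<sigma>2" .
    have "Kc = n / 2 * (ln v\<^sub>\<nu> - ln v\<^sub>\<mu>)" unfolding Kc_def mu.ln_Cv nu.ln_Cv n_def by (simp add: field_simps)
    also have "\<dots> \<le> n / 2 * (v\<^sub>\<nu> / \<sigma>2)" using L by (intro mult_left_mono) (auto simp: n_def)
    finally show ?thesis .
  qed
  have A0: "0 \<le> A" unfolding A_def using Mpos by auto
  have nA0: "0 \<le> n * A" using A0 by (simp add: n_def)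
  have B1: "(\<integral>y. sq y \<partial>P) / v\<^sub>\<nu> \<le> n * A / \<sigma>2"
  proof -
    have "(\<integral>y. sq y \<partial>P) / v\<^sub>\<nu> \<le> n * A / v\<^sub>\<nu>" using Esq nu(3) by (intro divide_right_mono) auto
    also have "\<dots> \<le> n * A / \<sigma>2" using nA0 sig by (intro divide_left_mono) auto
    finally show ?thesis .
  qed
  have B2: "S2 / v\<^sub>\<nu> \<le> n * A / \<sigma>2"
  proof -
    have "S2 / v\<^sub>\<nu> \<le> n * A / v\<^sub>\<nu>" using S2_le nu(3) by (intro divide_right_mono) auto
    also have "\<dots> \<le> n * A / \<sigma>2" using nA0 sig by (intro divide_left_mono) auto
    finally show ?thesis .
  qed
  have B3: "n / 2 * (v\<^sub>\<nu> / \<sigma>2) \<le> n / 2 * (A / \<sigma>2)"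
    using vA sig by (intro mult_left_mono divide_right_mono) (auto simp: n_def)
  have tot: "(\<integral>y. V y \<partial>lborel) \<le> 5 / 2 * (n * A) / \<sigma>2"
  proof -
    have "(\<integral>y. V y \<partial>lborel) \<le> n / 2 * (A / \<sigma>2) + n * A / \<sigma>2 + n * A / \<sigma>2"
      unfolding IV using Kc_le B1 B2 B3 by linarith
    also have "\<dots> = 5 / 2 * (n * A) / \<sigma>2" by (simp add: field_simps)
    finally show ?thesis .
  qed
  define M' where "M' = max Mb 1"
  have AM: "A \<le> 2 * M'\<^sup>2"
  proof -
    have "Mb \<le> M'" "1 \<le> M'" unfolding M'_def by auto
    then have "Mb \<le> M'\<^sup>2" "Mb\<^sup>2 \<le> M'\<^sup>2" using Mpos
      by (auto simp: power2_eq_square intro: order_trans[of _ "M' * 1"] mult_left_mono mult_mono)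
    then show ?thesis unfolding A_def by linarith
  qed
  have n2': "2 \<le> n" using n2 unfolding n_def by simp
  have fin: "5 / 2 * (n * A) \<le> 4 * n\<^sup>2 * M'\<^sup>2"
  proof -
    have "5 / 2 * (n * A) \<le> 5 / 2 * (n * (2 * M'\<^sup>2))" using AM n2' by (intro mult_left_mono) auto
    also have "\<dots> = 5 * n * M'\<^sup>2" by simp
    also have "\<dots> \<le> (4 * n) * n * M'\<^sup>2" using n2' by (intro mult_right_mono) auto
    also have "\<dots> = 4 * n\<^sup>2 * M'\<^sup>2" by (simp add: power2_eq_square)
    finally show ?thesis .
  qed
  have If2: "(\<integral>y. f y \<partial>lborel) \<le> 4 * n\<^sup>2 * M'\<^sup>2 / \<sigma>2"
    using If tot divide_right_mono[OF fin, of \<sigma>2] sig by linarith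
  have ac: "absolutely_continuous Q P"
    unfolding absolutely_continuous_def
  proof
    fix A assume "A \<in> null_sets Q"
    then have A: "A \<in> sets lborel" "AE y in lborel. y \<in> A \<longrightarrow> ennreal (q y) = 0"
      unfolding Q_eq by (subst (asm) null_sets_density_iff; simp)+
    then have "AE y in lborel. y \<in> A \<longrightarrow> ennreal (p y) = 0"
      by (elim eventually_mono) (metis q_pos ennreal_eq_0_iff not_le)
    with A show "A \<in> null_sets P" unfolding P_eq by (subst null_sets_density_iff) auto
  qed
  have PQ: "density Q (\<lambda>y. p y / q y) = P"
    unfolding Q_eq P_eq by (rule density_density_divide) (auto simp: less_imp_le p_pos q_pos less_imp_neq[OF q_pos, symmetric])
  interpret Qp: prob_space Q unfolding Q_def by (rule nu.prob_P)
  have RN: "AE y in Q. ennreal (p y / q y) = RN_deriv Q P y"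
    by (rule Qp.RN_deriv_unique[OF _ PQ]) (unfold measurable_cong_sets[OF sQ refl], measurable)
  then have "AE y in lborel. 0 < q y \<longrightarrow> ennreal (p y / q y) = RN_deriv Q P y"
    unfolding Q_eq by (subst (asm) AE_density) auto
  then have "AE y in lborel. 0 < p y \<longrightarrow> ennreal (p y / q y) = RN_deriv Q P y"
    using q_pos by (auto elim!: eventually_mono)
  then have RNP: "AE y in P. ennreal (p y / q y) = RN_deriv Q P y"
    unfolding P_eq by (subst AE_density) auto
  have entP: "AE y in P. ln (p y / q y) = entropy_density (exp 1) Q P y"
    using RNP
  proof (rule eventually_mono)
    fix y assume "ennreal (p y / q y) = RN_deriv Q P y"
    then show "ln (p y / q y) = entropy_density (exp 1) Q P y"
      unfolding entropy_density_def using p_pos[of y] q_pos[of y]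
      by (auto simp: log_def simp flip: \<open>ennreal (p y / q y) = RN_deriv Q P y\<close>)
  qed
  have intlog: "integrable P (\<lambda>y. ln (p y / q y))"
    unfolding P_eq using intf[unfolded f_def] by (subst integrable_density) (auto simp: p_pos less_imp_le)
  have intent: "integrable P (entropy_density (exp 1) Q P)"
  proof (rule integrable_cong_AE_imp[OF intlog _ entP])
    have "entropy_density (exp 1) Q P \<in> borel_measurable Q" by (rule measurable_entropy_density)
    then show "entropy_density (exp 1) Q P \<in> borel_measurable P"
      unfolding measurable_cong_sets[OF sP refl] measurable_cong_sets[OF sQ refl] .
  qed
  have KLval: "KL_divergence (exp 1) Q P = (\<integral>y. f y \<partial>lborel)"
    unfolding Q_eq P_eq f_def
    by (subst lborel.KL_density_density) (auto simp: less_imp_le p_pos q_pos log_def less_imp_neq[OF q_pos, symmetric])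
  have "KL P Q = ereal (\<integral>y. f y \<partial>lborel)"
    unfolding KL_def using ac intent KLval by simp
  then show ?thesis
    using If2 unfolding P_def Q_def n_def M'_def by simp
qed

end
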